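(* Let $1\leq a_1\leq\cdots\leq a_k$, $k\geq 3$, be an arbitrary partition of a natural number $n$. Then $$S(a_1,\dots,a_k)\prec S(\underbrace{1,\dots,1}_{k},n-k),$$ where the right-hand tree has $k$ branches of length $1$ and one branch of length $n-k$.
   Context: $M_k(G)$ denotes the number of closed walks of length $k$ in a graph $G$. For graphs $G,H$, $G\prec H$ means $M_k(G)\leq M_k(H)$ for all $k\geq 0$ with strict inequality for at least one $k$. For positive integers $c_1,\dots,c_m$, the starlike tree $S(c_1,\dots,c_m)$ is obtained from disjoint paths $P_{c_1+1},\dots,P_{c_m+1}$ ($P_r$ the path on $r$ vertices) by identifying one end vertex of each path into a single vertex (the center); the resulting pendant paths from the center are the branches, of lengths $c_1,\dots,c_m$. *)

theory Defs
  imports Main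
begin

definition closed_walks :: "'a set \<Rightarrow> ('a \<Rightarrow> 'a \<Rightarrow> bool) \<Rightarrow> nat \<Rightarrow> 'a list set" where
  "closed_walks V E k = {w. length w = Suc k \<and> set w \<subseteq> V \<and> hd w = last w \<and>
      (\<forall>i<k. E (w ! i) (w ! Suc i))}"

definition M :: "'a set \<Rightarrow> ('a \<Rightarrow> 'a \<Rightarrow> bool) \<Rightarrow> nat \<Rightarrow> nat" where
  "M V E k = card (closed_walks V E k)"

definition walk_prec :: "'a set \<Rightarrow> ('a \<Rightarrow> 'a \<Rightarrow> bool) \<Rightarrow> 'b set \<Rightarrow> ('b \<Rightarrow> 'b \<Rightarrow> bool) \<Rightarrow> bool" where
  "walk_prec V E W F \<longleftrightarrow> (\<forall>k. M V E k \<le> M W F k) \<and> (\<exists>k. M V E k < M W F k)"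

text \<open>Starlike tree S(c_1,...,c_m), branch lengths given as a list c.
Center vertex (0,0); the j-th vertex (1 \<le> j \<le> c_i) on branch i (i < m) is (i,j).\<close>
definition star_verts :: "nat list \<Rightarrow> (nat \<times> nat) set" where
  "star_verts c = insert (0,0) {(i,j). i < length c \<and> 1 \<le> j \<and> j \<le> c ! i}"

definition star_step :: "nat \<times> nat \<Rightarrow> nat \<times> nat \<Rightarrow> bool" where
  "star_step x y \<longleftrightarrow> (fst x = fst y \<and> snd y = snd x + 1) \<or> (x = (0,0) \<and> snd y = 1)"

definition star_adj :: "nat list \<Rightarrow> nat \<times> nat \<Rightarrow> nat \<times> nat \<Rightarrow> bool" where
  "star_adj c u v \<longleftrightarrow> u \<in> star_verts c \<and> v \<in> star_verts c \<and> (star_step u v \<or> star_step v u)"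

end

theory Submission
  imports Defs
begin

lemma star_verts_eq: "star_verts c = insert (0,0) (SIGMA i:{..<length c}. {1..c!i})"
  unfolding star_verts_def by auto

lemma finite_star_verts: "finite (star_verts c)"
  by (simp add: star_verts_eq)

lemma card_star_verts: "card (star_verts c) = Suc (sum_list c)"
proof -
  have "(0,0) \<notin> (SIGMA i:{..<length c}. {1..c!i})" by auto
  then have "card (star_verts c) = Suc (card (SIGMA i:{..<length c}. {1..c!i}))"
    by (simp add: star_verts_eq)
  also have "card (SIGMA i:{..<length c}. {1..c!i}) = (\<Sum>i<length c. c!i)"
    by (simp add: card_SigmaI)
  also have "\<dots> = sum_list c" by (simp add: sum_list_sum_nth lessThan_atLeast0)
  finally show ?thesis .
qed

lemma finite_cw: "finite V \<Longrightarrow> finite (closed_walks V E L)"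
proof -
  assume "finite V"
  have "closed_walks V E L \<subseteq> {w. set w \<subseteq> V \<and> length w = Suc L}"
    by (auto simp: closed_walks_def)
  then show ?thesis using finite_lists_length_eq[OF \<open>finite V\<close>] by (rule finite_subset)
qed

lemma cw0: "closed_walks V E 0 = (\<lambda>v. [v]) ` V"
proof
  show "closed_walks V E 0 \<subseteq> (\<lambda>v. [v]) ` V"
  proof
    fix w assume "w \<in> closed_walks V E 0"
    then have "length w = 1" "set w \<subseteq> V" by (auto simp: closed_walks_def)
    then obtain v where "w = [v]" by (auto simp: length_Suc_conv)
    then show "w \<in> (\<lambda>v. [v]) ` V" using \<open>set w \<subseteq> V\<close> by auto
  qed
  show "(\<lambda>v. [v]) ` V \<subseteq> closed_walks V E 0"
    by (auto simp: closed_walks_def)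
qed

lemma M0: "M V E 0 = card V"
  unfolding M_def cw0 by (rule card_image) (simp add: inj_on_def)

lemma cw_iff: "w \<in> closed_walks V E L \<longleftrightarrow>
   length w = Suc L \<and> (\<forall>t\<le>L. w!t \<in> V) \<and> w!L = w!0 \<and> (\<forall>t<L. E (w!t) (w!Suc t))"
proof
  assume "w \<in> closed_walks V E L"
  then have l: "length w = Suc L" and s: "set w \<subseteq> V" and h: "hd w = last w"
    and e: "\<forall>t<L. E (w!t) (w!Suc t)" by (auto simp: closed_walks_def)
  have "w \<noteq> []" using l by auto
  then have "w!L = w!0" using h l by (simp add: hd_conv_nth last_conv_nth)
  moreover have "\<forall>t\<le>L. w!t \<in> V" using s l by (auto intro!: subsetD[OF s] nth_mem)
  ultimately show "length w = Suc L \<and> (\<forall>t\<le>L. w!t \<in> V) \<and> w!L = w!0 \<and> (\<forall>t<L. E (w!t) (w!Suc t))"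
    using l e by auto
next
  assume a: "length w = Suc L \<and> (\<forall>t\<le>L. w!t \<in> V) \<and> w!L = w!0 \<and> (\<forall>t<L. E (w!t) (w!Suc t))"
  then have "w \<noteq> []" by auto
  then have "hd w = last w" using a by (simp add: hd_conv_nth last_conv_nth)
  moreover have "set w \<subseteq> V" using a by (auto simp: set_conv_nth)
  ultimately show "w \<in> closed_walks V E L" using a by (simp add: closed_walks_def)
qed

locale sw =
  fixes a :: "nat list" and k m :: nat
  assumes len: "length a = k" and pos: "\<forall>x\<in>set a. 1 \<le> x" and k2: "2 \<le> k"
    and srt: "sorted a" and nk: "k < sum_list a" and mdef: "m = sum_list a - k"
begin

abbreviation "Vs \<equiv> star_verts a"
abbreviation "Es \<equiv> star_adj a"
definition bt :: "nat list" where "bt = replicate k 1 @ [m]"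
abbreviation "Vt \<equiv> star_verts bt"
abbreviation "Et \<equiv> star_adj bt"

lemma a_pos: "i < k \<Longrightarrow> 1 \<le> a!i"
  using pos len nth_mem by auto

definition off :: "nat \<Rightarrow> nat" where "off i = (\<Sum>j<i. (a!j - 1))"

lemma off_plus: "i \<le> k \<Longrightarrow> off i + i = (\<Sum>j<i. a!j)"
proof (induction i)
  case 0 then show ?case by (simp add: off_def)
next
  case (Suc i)
  then have "1 \<le> a!i" using a_pos by auto
  then show ?case using Suc by (simp add: off_def)
qed

lemma off_k: "off k = m"
proof -
  have "off k + k = (\<Sum>j<k. a!j)" using off_plus by simp
  also have "\<dots> = sum_list a" using len by (simp add: sum_list_sum_nth lessThan_atLeast0)
  finally show ?thesis using mdef by simp
qed

lemma off_Suc: "off (Suc i) = off i + (a!i - 1)" by (simp add: off_def)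

lemma off_mono: "i \<le> j \<Longrightarrow> off i \<le> off j"
  unfolding off_def by (rule sum_mono2) auto

lemma off_bound: "i < k \<Longrightarrow> off i + a!i - 1 \<le> m"
proof -
  assume "i < k"
  then have "off i + a!i - 1 = off (Suc i)" using a_pos[of i] off_Suc[of i] by simp
  also have "\<dots> \<le> off k" using \<open>i < k\<close> by (intro off_mono) simp
  finally show ?thesis using off_k by simp
qed

lemma a_le: "i < k \<Longrightarrow> a!i \<le> Suc m"
  using off_bound[of i] by simp

lemma m_pos: "1 \<le> m" using nk mdef by simp

lemma a0_le: "a!0 \<le> m"
proof -
  have "off 2 \<le> off k" using k2 by (intro off_mono)
  then have "(a!0 - 1) + (a!1 - 1) \<le> m" using off_k by (simp add: off_def numeral_2_eq_2)
  moreover have "a!0 \<le> a!1" using srt k2 len by (intro sorted_nth_mono) auto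
  ultimately show ?thesis using m_pos by linarith
qed

lemma inVs: "v \<in> Vs \<longleftrightarrow> v = (0,0) \<or> (fst v < k \<and> 1 \<le> snd v \<and> snd v \<le> a ! fst v)"
  by (cases v) (auto simp: star_verts_def len)

lemma b_nth: "i < k \<Longrightarrow> bt ! i = 1" "bt ! k = m" "length bt = Suc k"
  by (auto simp: nth_append bt_def)

lemma inVt: "v \<in> Vt \<longleftrightarrow> v = (0,0) \<or> (fst v < k \<and> snd v = 1) \<or> (fst v = k \<and> 1 \<le> snd v \<and> snd v \<le> m)"
proof (cases v)
  case (Pair i j)
  have "v \<in> Vt \<longleftrightarrow> v = (0,0) \<or> (i < Suc k \<and> 1 \<le> j \<and> j \<le> bt ! i)"
    using Pair b_nth(3) by (auto simp: star_verts_def)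
  also have "\<dots> \<longleftrightarrow> v = (0,0) \<or> (i < k \<and> j = 1) \<or> (i = k \<and> 1 \<le> j \<and> j \<le> m)"
    using b_nth by (auto simp: less_Suc_eq)
  finally show ?thesis using Pair by simp
qed

lemma nc_snd: "v \<in> Vs \<Longrightarrow> v = (0,0) \<longleftrightarrow> snd v = 0"
  by (cases v) (auto simp: inVs)

lemma Es_cases: "Es x y \<Longrightarrow> x \<in> Vs \<and> y \<in> Vs \<and>
   ((x = (0,0) \<and> y \<noteq> (0,0) \<and> snd y = 1) \<or> (y = (0,0) \<and> x \<noteq> (0,0) \<and> snd x = 1) \<or>
    (x \<noteq> (0,0) \<and> y \<noteq> (0,0) \<and> fst x = fst y \<and> (snd y = Suc (snd x) \<or> snd x = Suc (snd y))))"
  unfolding star_adj_def star_step_def using nc_snd[of x] nc_snd[of y]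
  by (cases x; cases y) auto

lemma Et_I: "x \<in> Vt \<Longrightarrow> y \<in> Vt \<Longrightarrow> star_step x y \<or> star_step y x \<Longrightarrow> Et x y"
  by (simp add: star_adj_def)

lemma Et_sym: "Et x y \<Longrightarrow> Et y x"
  by (auto simp: star_adj_def)

definition P :: "nat \<Rightarrow> nat \<times> nat" where "P j = (if j = 0 then (0,0) else (k,j))"

lemma P_in: "j \<le> m \<Longrightarrow> P j \<in> Vt"
  unfolding inVt P_def by auto

lemma P_edge: "Suc j \<le> m \<Longrightarrow> Et (P j) (P (Suc j))"
proof (rule Et_I)
  assume "Suc j \<le> m"
  then show "P j \<in> Vt" "P (Suc j) \<in> Vt" by (auto intro: P_in)
  show "star_step (P j) (P (Suc j)) \<or> star_step (P (Suc j)) (P j)"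
    by (auto simp: P_def star_step_def)
qed

lemma P_edge': "Suc j \<le> m \<Longrightarrow> Et (P (Suc j)) (P j)"
  using P_edge Et_sym by blast

lemma P_inj: "P i = P j \<Longrightarrow> i = j"
  using k2 by (auto simp: P_def split: if_splits)

lemma P_not_leaf: "\<not> (fst (P j) < k \<and> snd (P j) = 1)"
  by (auto simp: P_def)

definition phi :: "nat \<times> nat \<Rightarrow> nat \<times> nat \<Rightarrow> nat \<times> nat" where
  "phi x y = (if y = (0,0) then (0,0) else if x = (0,0) then (fst y, 1) else P (snd x - 1))"

lemma c_in_Vt: "(0,0) \<in> Vt" by (simp add: inVt)

lemma leaf_in_Vt: "i < k \<Longrightarrow> (i, Suc 0) \<in> Vt" 
  using inVt[of "(i, Suc 0)"] by simp


lemma Et_c_leaf: "i < k \<Longrightarrow> Et (0,0) (i,Suc 0)"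
  by (rule Et_I) (auto simp: star_step_def intro: c_in_Vt leaf_in_Vt)

lemma Et_leaf_c: "i < k \<Longrightarrow> Et (i,Suc 0) (0,0)"
  using Et_c_leaf Et_sym by blast

lemma phi_in: "Es x y \<Longrightarrow> phi x y \<in> Vt"
proof -
  assume e: "Es x y"
  note E = Es_cases[OF e]
  show ?thesis
  proof (cases "y = (0,0)")
    case True then show ?thesis by (simp add: phi_def c_in_Vt)
  next
    case False
    show ?thesis
    proof (cases "x = (0,0)")
      case True
      then have "fst y < k" using E False inVs by auto
      then show ?thesis using False True by (simp add: phi_def leaf_in_Vt)
    next
      case xn: False
      have "snd x \<le> a ! fst x" "fst x < k" using E xn inVs by auto
      then have "snd x - 1 \<le> m" using a_le[of "fst x"] by simp
      then show ?thesis using False xn by (simp add: phi_def P_in)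
    qed
  qed
qed

lemma phi_edge: "Es x y \<Longrightarrow> Es y z \<Longrightarrow> Et (phi x y) (phi y z)"
proof -
  assume exy: "Es x y" and eyz: "Es y z"
  note E1 = Es_cases[OF exy] and E2 = Es_cases[OF eyz]
  have bnd: "v \<in> Vs \<Longrightarrow> v \<noteq> (0,0) \<Longrightarrow> fst v < k \<and> 1 \<le> snd v \<and> snd v \<le> Suc m" for v
    using inVs[of v] a_le[of "fst v"] by auto
  show ?thesis
  proof (cases "y = (0,0)")
    case True
    then have "z \<noteq> (0,0)" "snd z = 1" using E2 by auto
    then have "fst z < k" using bnd[of z] E2 by auto
    then show ?thesis using True \<open>z \<noteq> (0,0)\<close> by (simp add: phi_def Et_c_leaf)
  next
    case yn: False
    show ?thesis
    proof (cases "z = (0,0)")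
      case True
      then have sy: "snd y = 1" using E2 yn by auto
      have fy: "fst y < k" using bnd[of y] E1 yn by auto
      show ?thesis
      proof (cases "x = (0,0)")
        case True
        then show ?thesis using \<open>z = (0,0)\<close> yn fy by (simp add: phi_def Et_leaf_c)
      next
        case xn: False
        then have "snd x = 2" using E1 yn sy bnd[of x] by auto
        then have "1 \<le> m" using bnd[of x] E1 xn by auto
        then have "Et (P 1) (P 0)" using P_edge'[of 0] by simp
        then show ?thesis using \<open>z = (0,0)\<close> yn xn \<open>snd x = 2\<close> by (simp add: phi_def P_def)
      qed
    next
      case zn: False
      show ?thesis
      proof (cases "x = (0,0)")
        case True
        then have "snd y = 1" "fst y < k" using E1 yn bnd[of y] by auto
        then show ?thesis using True yn zn by (simp add: phi_def P_def Et_leaf_c)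
      next
        case xn: False
        have bx: "1 \<le> snd x \<and> snd x \<le> Suc m" and hy: "1 \<le> snd y \<and> snd y \<le> Suc m"
          using bnd[of x] bnd[of y] E1 xn yn by auto
        have "snd y = Suc (snd x) \<or> snd x = Suc (snd y)" using E1 xn yn by auto
        then show ?thesis
        proof
          assume h: "snd y = Suc (snd x)"
          then have "Et (P (snd x - 1)) (P (Suc (snd x - 1)))" using bx hy by (intro P_edge) auto
          then show ?thesis using h bx xn yn zn by (simp add: phi_def)
        next
          assume h: "snd x = Suc (snd y)"
          then have "Et (P (Suc (snd y - 1))) (P (snd y - 1))" using hy bx by (intro P_edge') auto
          then show ?thesis using h hy xn yn zn by (simp add: phi_def)
        qed
      qed
    qed
  qed
qed

definition dec :: "nat \<times> nat \<Rightarrow> nat" where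
  "dec v = (if v = (0,0) then 1 else if fst v = k then snd v + 1 else 0)"

lemma dec_phi: "Es x y \<Longrightarrow> dec (phi x y) = snd x"
proof -
  assume e: "Es x y"
  note E = Es_cases[OF e]
  show ?thesis
  proof (cases "y = (0,0)")
    case True then show ?thesis using E by (simp add: phi_def dec_def)
  next
    case yn: False
    show ?thesis
    proof (cases "x = (0,0)")
      case True
      then have "fst y < k" using E yn inVs by auto
      then show ?thesis using True yn by (simp add: phi_def dec_def)
    next
      case xn: False
      have "1 \<le> snd x" using E xn inVs by auto
      then show ?thesis using xn yn k2 by (auto simp: phi_def dec_def P_def)
    qed
  qed
qed

abbreviation "CS L \<equiv> closed_walks Vs Es L"
abbreviation "CT L \<equiv> closed_walks Vt Et L"

definition win :: "(nat \<times> nat) list \<Rightarrow> (nat \<times> nat) list" where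
  "win w = map (\<lambda>t. phi (w ! (if t = 0 then length w - 2 else t - 1)) (w ! t)) [0..<length w]"

lemma win_len: "length (win w) = length w" by (simp add: win_def)

lemma win_nth: "length w = Suc L \<Longrightarrow> t \<le> L \<Longrightarrow>
   win w ! t = phi (w ! (if t = 0 then L - 1 else t - 1)) (w ! t)"
  by (simp add: win_def nth_append del: upt_Suc)

lemma pv_edge: "w \<in> CS L \<Longrightarrow> 1 \<le> L \<Longrightarrow> t \<le> L \<Longrightarrow>
   Es (w ! (if t = 0 then L - 1 else t - 1)) (w ! t)"
proof -
  assume w: "w \<in> CS L" and L: "1 \<le> L" and t: "t \<le> L"
  note W = w[unfolded cw_iff]
  show ?thesis
  proof (cases "t = 0")
    case True
    have "L - 1 < L" using L by simp
    then have "Es (w ! (L - 1)) (w ! Suc (L - 1))" using W by blast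
    moreover have "Suc (L - 1) = L" using L by simp
    ultimately show ?thesis using True W by simp
  next
    case False
    have "t - 1 < L" using t False by simp
    then have "Es (w ! (t - 1)) (w ! Suc (t - 1))" using W by blast
    moreover have "Suc (t - 1) = t" using False by simp
    ultimately show ?thesis using False by simp
  qed
qed

lemma win_mem: "w \<in> CS L \<Longrightarrow> 1 \<le> L \<Longrightarrow> win w \<in> CT L"
proof -
  assume w: "w \<in> CS L" and L: "1 \<le> L"
  note W = w[unfolded cw_iff]
  have l: "length (win w) = Suc L" using W by (simp add: win_len)
  have v: "\<forall>t\<le>L. win w ! t \<in> Vt"
    using W pv_edge[OF w L] phi_in win_nth by auto
  have c: "win w ! L = win w ! 0"
    using W L by (simp add: win_nth)
  have e: "\<forall>t<L. Et (win w ! t) (win w ! Suc t)"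
  proof (intro allI impI)
    fix t assume "t < L"
    have 1: "win w ! Suc t = phi (w ! t) (w ! Suc t)" using W \<open>t < L\<close> by (simp add: win_nth)
    have 2: "win w ! t = phi (w ! (if t = 0 then L - 1 else t - 1)) (w ! t)"
      using W \<open>t < L\<close> by (simp add: win_nth)
    show "Et (win w ! t) (win w ! Suc t)"
      unfolding 1 2 using pv_edge[OF w L, of t] W \<open>t < L\<close> by (intro phi_edge) auto
  qed
  show ?thesis unfolding cw_iff using l v c e by blast
qed

lemma win_snd: "w \<in> CS L \<Longrightarrow> 1 \<le> L \<Longrightarrow> t < L \<Longrightarrow> snd (w ! t) = dec (win w ! Suc t)"
proof -
  assume w: "w \<in> CS L" and L: "1 \<le> L" and t: "t < L"
  note W = w[unfolded cw_iff]
  have "win w ! Suc t = phi (w ! t) (w ! Suc t)" using W t by (simp add: win_nth)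
  then show ?thesis using W t dec_phi by auto
qed

lemma win_inj:
  assumes w: "w \<in> CS L" and w': "w' \<in> CS L" and L: "1 \<le> L" and c: "(0,0) \<in> set w"
    and eq: "win w = win w'"
  shows "w = w'"
proof -
  note W = w[unfolded cw_iff] and W' = w'[unfolded cw_iff]
  have snd_lt: "snd (w!t) = snd (w'!t)" if "t < L" for t
    using win_snd[OF w L that] win_snd[OF w' L that] eq by simp
  have snd_eq: "snd (w!t) = snd (w'!t)" if "t \<le> L" for t
  proof (cases "t = L")
    case True
    then show ?thesis using snd_lt[of 0] L W W' by simp
  next
    case False then show ?thesis using snd_lt that by simp
  qed
  have cen: "w!t = (0,0) \<longleftrightarrow> w'!t = (0,0)" if "t \<le> L" for t
    using nc_snd[of "w!t"] nc_snd[of "w'!t"] W W' that snd_eq[OF that] by auto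
  obtain t0 where t0: "t0 < L" "w!t0 = (0,0)"
  proof -
    from c obtain t where t: "t < length w" "w!t = (0,0)" by (auto simp: in_set_conv_nth)
    show ?thesis
    proof (cases "t = L")
      case True
      then show ?thesis using that[of 0] t W L by simp
    next
      case False
      then show ?thesis using that[of t] t W by simp
    qed
  qed
  have step: "fst (w!Suc u) = fst (w'!Suc u)" if ih: "fst (w!u) = fst (w'!u)" and u: "u < L" for u
  proof -
    have e: "Es (w!u) (w!Suc u)" "Es (w'!u) (w'!Suc u)" using W W' u by auto
    have ph: "phi (w!u) (w!Suc u) = phi (w'!u) (w'!Suc u)"
      using win_nth[of w L "Suc u"] win_nth[of w' L "Suc u"] W W' u eq by simp
    have sy: "snd (w!Suc u) = snd (w'!Suc u)" using snd_eq u by simp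
    show ?thesis
    proof (cases "w!Suc u = (0,0)")
      case True
      then have "w'!Suc u = (0,0)" using cen[of "Suc u"] u by simp
      then show ?thesis using True by simp
    next
      case yn: False
      then have yn': "w'!Suc u \<noteq> (0,0)" using cen[of "Suc u"] u by simp
      show ?thesis
      proof (cases "w!u = (0,0)")
        case True
        then have "w'!u = (0,0)" using cen[of u] u by simp
        then show ?thesis using True ph yn yn' by (simp add: phi_def)
      next
        case False
        then have "w'!u \<noteq> (0,0)" using cen[of u] u by simp
        then show ?thesis using False yn yn' Es_cases[OF e(1)] Es_cases[OF e(2)] ih by auto
      qed
    qed
  qed
  have fm: "fst (w!((t0+s) mod L)) = fst (w'!((t0+s) mod L))" if "s \<le> L" for s
    using that
  proof (induction s)
    case 0
    then show ?case using t0 cen[of t0] by simp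
  next
    case (Suc s)
    define u where "u = (t0+s) mod L"
    have u: "u < L" using L u_def by simp
    have ih: "fst (w!u) = fst (w'!u)" using Suc u_def by simp
    have st: "fst (w!Suc u) = fst (w'!Suc u)" using step[OF ih u] .
    have md: "(t0 + Suc s) mod L = (if Suc u = L then 0 else Suc u)"
      unfolding u_def by (simp add: mod_Suc)
    show ?case
    proof (cases "Suc u = L")
      case True
      then show ?thesis using md st W W' by simp
    next
      case False
      then show ?thesis using md st by simp
    qed
  qed
  have fst_lt: "fst (w!t) = fst (w'!t)" if "t < L" for t
  proof -
    define s where "s = (t + L - t0) mod L"
    have "s \<le> L" using L s_def by simp
    moreover have "(t0 + s) mod L = t"
    proof -
      have "(t0 + s) mod L = (t0 + (t + L - t0)) mod L" unfolding s_def by (simp add: mod_add_right_eq)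
      also have "t0 + (t + L - t0) = t + L" using t0 by simp
      finally show ?thesis using that by simp
    qed
    ultimately show ?thesis using fm by metis
  qed
  have all: "w!t = w'!t" if "t \<le> L" for t
  proof -
    have "fst (w!t) = fst (w'!t)"
    proof (cases "t = L")
      case True then show ?thesis using fst_lt[of 0] L W W' by simp
    next
      case False then show ?thesis using fst_lt that by simp
    qed
    then show ?thesis using snd_eq[OF that] by (simp add: prod_eq_iff)
  qed
  show ?thesis using all W W' by (intro nth_equalityI) auto
qed

definition emb :: "nat \<times> nat \<Rightarrow> nat \<times> nat" where
  "emb v = P (off (fst v) + snd v - 1)"

lemma branch_const:
  assumes w: "w \<in> CS L" and nc: "(0,0) \<notin> set w"
  shows "t \<le> L \<Longrightarrow> fst (w!t) = fst (w!0)"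
proof (induction t)
  case 0 then show ?case by simp
next
  case (Suc t)
  note W = w[unfolded cw_iff]
  have e: "Es (w!t) (w!Suc t)" using W Suc by auto
  have "w!t \<noteq> (0,0)" "w!Suc t \<noteq> (0,0)" using nc W Suc nth_mem[of t w] nth_mem[of "Suc t" w]
    by (auto simp del: nth_mem)
  then show ?case using Es_cases[OF e] Suc by auto
qed

lemma nc_props:
  assumes w: "w \<in> CS L" and nc: "(0,0) \<notin> set w" and t: "t \<le> L"
  shows "fst (w!t) < k \<and> 1 \<le> snd (w!t) \<and> snd (w!t) \<le> a ! fst (w!t)"
proof -
  note W = w[unfolded cw_iff]
  have "w!t \<noteq> (0,0)" using nc W t nth_mem[of t w] by (auto simp del: nth_mem)
  then show ?thesis using W t inVs[of "w!t"] by auto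
qed

lemma emb_mem:
  assumes w: "w \<in> CS L" and nc: "(0,0) \<notin> set w"
  shows "map emb w \<in> CT L"
proof -
  note W = w[unfolded cw_iff]
  have v: "\<forall>t\<le>L. map emb w ! t \<in> Vt"
  proof (intro allI impI)
    fix t assume t: "t \<le> L"
    note N = nc_props[OF w nc t]
    have "off (fst (w!t)) + snd (w!t) - 1 \<le> m"
      using off_bound[of "fst (w!t)"] N by linarith
    then show "map emb w ! t \<in> Vt" using W t by (simp add: emb_def P_in)
  qed
  have e: "\<forall>t<L. Et (map emb w ! t) (map emb w ! Suc t)"
  proof (intro allI impI)
    fix t assume t: "t < L"
    have e: "Es (w!t) (w!Suc t)" using W t by auto
    note N1 = nc_props[OF w nc, of t] and N2 = nc_props[OF w nc, of "Suc t"]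
    have f: "fst (w!Suc t) = fst (w!t)" using branch_const[OF w nc, of t] branch_const[OF w nc, of "Suc t"] t by simp
    have bd: "off (fst (w!t)) + a ! fst (w!t) - 1 \<le> m" using off_bound N1 t by simp
    have "snd (w!Suc t) = Suc (snd (w!t)) \<or> snd (w!t) = Suc (snd (w!Suc t))"
      using Es_cases[OF e] nc W t nth_mem[of t w] nth_mem[of "Suc t" w] by (auto simp del: nth_mem)
    then show "Et (map emb w ! t) (map emb w ! Suc t)"
    proof
      assume h: "snd (w!Suc t) = Suc (snd (w!t))"
      have "Et (P (off (fst (w!t)) + snd (w!t) - 1)) (P (Suc (off (fst (w!t)) + snd (w!t) - 1)))"
        using N1 N2 t h f bd by (intro P_edge) auto
      then show ?thesis using W t h f N1 by (simp add: emb_def)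
    next
      assume h: "snd (w!t) = Suc (snd (w!Suc t))"
      have "Et (P (Suc (off (fst (w!t)) + snd (w!Suc t) - 1))) (P (off (fst (w!t)) + snd (w!Suc t) - 1))"
        using N1 N2 t h f bd by (intro P_edge') auto
      then show ?thesis using W t h f N2 by (simp add: emb_def)
    qed
  qed
  show ?thesis unfolding cw_iff using W v e by simp
qed

lemma emb_cross:
  assumes w: "w \<in> CS L" and w': "w' \<in> CS L" and L: "1 \<le> L"
    and nc: "(0,0) \<notin> set w" and nc': "(0,0) \<notin> set w'"
    and lt: "fst (w!0) < fst (w'!0)"
  shows "map emb w \<noteq> map emb w'"
proof
  assume eq: "map emb w = map emb w'"
  note W = w[unfolded cw_iff] and W' = w'[unfolded cw_iff]
  define i where "i = fst (w!0)"
  define i' where "i' = fst (w'!0)"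
  have i'k: "i' < k" using nc_props[OF w' nc', of 0] i'_def by simp
  have val: "off i + snd (w!t) - 1 = off (Suc i) \<and> snd (w!t) = a!i" if t: "t \<le> L" for t
  proof -
    have "emb (w!t) = emb (w'!t)" using eq t W W'
      by (metis Suc_le_mono le_imp_less_Suc length_map nth_map)
    then have e: "off i + snd (w!t) - 1 = off i' + snd (w'!t) - 1"
      using branch_const[OF w nc t] branch_const[OF w' nc' t] i_def i'_def
      by (auto simp: emb_def dest: P_inj)
    have N: "1 \<le> snd (w!t)" "snd (w!t) \<le> a ! i" "1 \<le> snd (w'!t)"
      using nc_props[OF w nc t] nc_props[OF w' nc' t] branch_const[OF w nc t] i_def by auto
    have ik: "i < k" using i'k lt i_def i'_def by simp
    have "off (Suc i) \<le> off i'" using lt i_def i'_def by (intro off_mono) simp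
    moreover have "off (Suc i) = off i + (a!i - 1)" by (rule off_Suc)
    ultimately show ?thesis using e N by linarith
  qed
  have e: "Es (w!0) (w!Suc 0)" using W L by auto
  have "snd (w!Suc 0) = Suc (snd (w!0)) \<or> snd (w!0) = Suc (snd (w!Suc 0))"
    using Es_cases[OF e] nc W L nth_mem[of 0 w] nth_mem[of "Suc 0" w] by (auto simp del: nth_mem)
  then show False using val[of 0] val[of 1] L by auto
qed

lemma emb_inj:
  assumes w: "w \<in> CS L" and w': "w' \<in> CS L" and L: "1 \<le> L"
    and nc: "(0,0) \<notin> set w" and nc': "(0,0) \<notin> set w'"
    and eq: "map emb w = map emb w'"
  shows "w = w'"
proof -
  note W = w[unfolded cw_iff] and W' = w'[unfolded cw_iff]
  have same: "fst (w!0) = fst (w'!0)"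
    using emb_cross[OF w w' L nc nc'] emb_cross[OF w' w L nc' nc] eq by (metis linorder_neqE_nat)
  have all: "w!t = w'!t" if t: "t \<le> L" for t
  proof -
    have "emb (w!t) = emb (w'!t)" using eq t W W'
      by (metis Suc_le_mono le_imp_less_Suc length_map nth_map)
    moreover have f: "fst (w!t) = fst (w'!t)"
      using branch_const[OF w nc t] branch_const[OF w' nc' t] same by simp
    ultimately have "off (fst (w!t)) + snd (w!t) - 1 = off (fst (w!t)) + snd (w'!t) - 1"
      by (auto simp: emb_def dest: P_inj)
    moreover have "1 \<le> snd (w!t)" "1 \<le> snd (w'!t)"
      using nc_props[OF w nc t] nc_props[OF w' nc' t] by auto
    ultimately have "snd (w!t) = snd (w'!t)" by linarith
    then show ?thesis using f by (simp add: prod_eq_iff)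
  qed
  show ?thesis using all W W' by (intro nth_equalityI) auto
qed

definition F :: "(nat \<times> nat) list \<Rightarrow> (nat \<times> nat) list" where
  "F w = (if (0,0) \<in> set w then win w else map emb w)"

lemma win_leaf:
  assumes w: "w \<in> CS L" and L: "1 \<le> L" and c: "(0,0) \<in> set w"
  shows "\<exists>t<length (win w). fst (win w ! t) < k \<and> snd (win w ! t) = 1"
proof -
  note W = w[unfolded cw_iff]
  obtain t0 where t0: "t0 < L" "w!t0 = (0,0)"
  proof -
    from c obtain t where t: "t < length w" "w!t = (0,0)" by (auto simp: in_set_conv_nth)
    show ?thesis
    proof (cases "t = L")
      case True
      then show ?thesis using that[of 0] t W L by simp
    next
      case False
      then show ?thesis using that[of t] t W by simp
    qed
  qed
  have e: "Es (w!t0) (w!Suc t0)" using W t0 by auto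
  have yn: "w!Suc t0 \<noteq> (0,0)" "fst (w!Suc t0) < k" using Es_cases[OF e] t0 inVs by auto
  have "win w ! Suc t0 = phi (w!t0) (w!Suc t0)" using W t0 by (simp add: win_nth)
  then have "win w ! Suc t0 = (fst (w!Suc t0), 1)" using t0 yn by (simp add: phi_def)
  then show ?thesis using yn t0 W by (intro exI[of _ "Suc t0"]) (auto simp: win_len)
qed

lemma F_mem: "w \<in> CS L \<Longrightarrow> 1 \<le> L \<Longrightarrow> F w \<in> CT L"
  by (auto simp: F_def intro: win_mem emb_mem)

lemma F_inj: "1 \<le> L \<Longrightarrow> inj_on F (CS L)"
proof (rule inj_onI)
  fix w w' assume L: "1 \<le> L" and w: "w \<in> CS L" and w': "w' \<in> CS L" and eq: "F w = F w'"
  have notP: "\<not> (fst (map emb v ! t) < k \<and> snd (map emb v ! t) = 1)" if "t < length v" for v t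
    using that P_not_leaf by (simp add: emb_def)
  show "w = w'"
  proof (cases "(0,0) \<in> set w")
    case True
    note cw = True
    show ?thesis
    proof (cases "(0,0) \<in> set w'")
      case True
      then show ?thesis using cw eq win_inj[OF w w' L cw] by (simp add: F_def)
    next
      case False
      then have "win w = map emb w'" using cw eq by (simp add: F_def)
      then show ?thesis using win_leaf[OF w L cw] notP[of _ w'] by (metis length_map)
    qed
  next
    case False
    note cw = False
    show ?thesis
    proof (cases "(0,0) \<in> set w'")
      case True
      then have "win w' = map emb w" using cw eq by (simp add: F_def)
      then show ?thesis using win_leaf[OF w' L True] notP[of _ w] by (metis length_map)
    next
      case False
      then show ?thesis using cw eq emb_inj[OF w w' L cw] by (simp add: F_def)
    qed
  qed
qed

definition gg :: "nat \<Rightarrow> nat" where "gg u = (if u \<le> m then u else 2*m - u)"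

definition Wst :: "(nat \<times> nat) list" where
  "Wst = map (\<lambda>t. if t = 0 then (0,0) else if t = 1 then (0,1) else P (gg (t - 2))) [0..<2*m+3]"

lemma Wst_nth: "t < 2*m+3 \<Longrightarrow> Wst ! t = (if t = 0 then (0,0) else if t = 1 then (0,1) else P (gg (t - 2)))"
  unfolding Wst_def by (simp del: upt_Suc)

lemma Wst_len: "length Wst = 2*m+3" by (simp add: Wst_def)

lemma gg_le: "gg u \<le> m" unfolding gg_def by arith

lemma Wst_mem: "Wst \<in> CT (2*m+2)"
proof -
  have l: "length Wst = Suc (2*m+2)" by (simp add: Wst_len)
  have v: "\<forall>t\<le>2*m+2. Wst ! t \<in> Vt"
  proof (intro allI impI)
    fix t assume t: "t \<le> 2*m+2"
    show "Wst ! t \<in> Vt"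
      using t Wst_nth[of t] k2 c_in_Vt leaf_in_Vt[of 0] P_in[OF gg_le] by auto
  qed
  have c: "Wst ! (2*m+2) = Wst ! 0"
    using Wst_nth[of "2*m+2"] Wst_nth[of 0] m_pos by (simp add: gg_def P_def)
  have e: "\<forall>t<2*m+2. Et (Wst ! t) (Wst ! Suc t)"
  proof (intro allI impI)
    fix t assume t: "t < 2*m+2"
    show "Et (Wst ! t) (Wst ! Suc t)"
    proof (cases "t \<le> 1")
      case True
      then consider "t = 0" | "t = 1" by linarith
      then show ?thesis
      proof cases
        case 1 then show ?thesis using Wst_nth[of 0] Wst_nth[of 1] Et_c_leaf[of 0] k2 by simp
      next
        case 2 then show ?thesis using Wst_nth[of 1] Wst_nth[of "Suc (Suc 0)"] Et_leaf_c[of 0] k2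
          by (simp add: gg_def P_def)
      qed
    next
      case False
      define u where "u = t - 2"
      have u: "u < 2*m" "t = u + 2" using t False u_def by auto
      have w1: "Wst ! t = P (gg u)" using Wst_nth[of t] u by simp
      have w2: "Wst ! Suc t = P (gg (Suc u))" using Wst_nth[of "Suc t"] u by simp
      show ?thesis
      proof (cases "u < m")
        case True
        then have "gg u = u" "gg (Suc u) = Suc u" by (auto simp: gg_def)
        then show ?thesis using w1 w2 True P_edge[of u] by simp
      next
        case False
        then have "gg u = Suc (gg (Suc u))" "Suc (gg (Suc u)) \<le> m" using u by (auto simp: gg_def)
        then show ?thesis using w1 w2 P_edge'[of "gg (Suc u)"] by simp
      qed
    qed
  qed
  show ?thesis unfolding cw_iff using l v c e by blast
qed

lemma dec_P: "dec (P j) = Suc j"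
  by (simp add: dec_def P_def)

lemma Wst_notin: "Wst \<notin> F ` CS (2*m+2)"
proof
  assume "Wst \<in> F ` CS (2*m+2)"
  then obtain w where w: "w \<in> CS (2*m+2)" and eq: "F w = Wst" by auto
  note W = w[unfolded cw_iff]
  have L: "1 \<le> 2*m+2" by simp
  have W1: "Wst ! 1 = (0, 1)" using Wst_nth[of 1] by simp
  show False
  proof (cases "(0,0) \<in> set w")
    case False
    then have "map emb w ! 1 = (0,1)" using eq W1 by (simp add: F_def)
    then show False using W P_not_leaf[of "off (fst (w!1)) + snd (w!1) - 1"] k2 by (simp add: emb_def)
  next
    case True
    then have ww: "win w = Wst" using eq by (simp add: F_def)
    have "snd (w!0) = dec (Wst ! 1)" using win_snd[OF w L, of 0] ww by simp
    then have "snd (w!0) = 0" using W1 k2 by (simp add: dec_def)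
    then have w0: "w!0 = (0,0)" using nc_snd[of "w!0"] W by auto
    have e0: "Es (w!0) (w!1)" using W by auto
    have w1n: "w!1 \<noteq> (0,0)" using Es_cases[OF e0] w0 by auto
    have "win w ! 1 = phi (w!0) (w!1)" using W win_nth[of w "2*m+2" 1] by simp
    then have f1: "fst (w!1) = 0" using ww W1 w0 w1n by (simp add: phi_def)
    have sn: "snd (w!t) = t" if "1 \<le> t" "t \<le> Suc m" for t
    proof -
      have "t < 2*m+2" using that m_pos by simp
      then have "snd (w!t) = dec (Wst ! Suc t)" using win_snd[OF w L, of t] ww by simp
      also have "Wst ! Suc t = P (t - 1)"
      proof -
        have "t - 1 \<le> m" using that by simp
        then show ?thesis using Wst_nth[of "Suc t"] that by (simp add: gg_def)
      qed
      finally show ?thesis using dec_P that by simp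
    qed
    have fz: "fst (w!t) = 0" if "1 \<le> t" "t \<le> Suc m" for t
      using that
    proof (induction t)
      case 0 then show ?case by simp
    next
      case (Suc t)
      show ?case
      proof (cases "t = 0")
        case True then show ?thesis using f1 by simp
      next
        case False
        have e: "Es (w!t) (w!Suc t)" using W Suc m_pos by auto
        have "snd (w!t) \<noteq> 0" "snd (w!Suc t) \<noteq> 0" using sn[of t] sn[of "Suc t"] False Suc by auto
        then have "w!t \<noteq> (0,0)" "w!Suc t \<noteq> (0,0)" by auto
        then show ?thesis using Es_cases[OF e] Suc False by auto
      qed
    qed
    have "w!(Suc m) \<in> Vs" using W m_pos by auto
    moreover have "w!(Suc m) = (0, Suc m)" using sn[of "Suc m"] fz[of "Suc m"] by (simp add: prod_eq_iff)
    ultimately have "Suc m \<le> a!0" using inVs by auto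
    then show False using a0_le by simp
  qed
qed

lemma sum_bt: "sum_list bt = sum_list a"
  unfolding bt_def using nk mdef by (simp add: sum_list_replicate)

lemma le_all: "M Vs Es L \<le> M Vt Et L"
proof (cases "L = 0")
  case True
  then show ?thesis by (simp add: M0 card_star_verts sum_bt)
next
  case False
  then have L: "1 \<le> L" by simp
  have "card (CS L) \<le> card (CT L)"
    by (rule card_inj_on_le[OF F_inj[OF L]]) (auto intro: F_mem[OF _ L] finite_cw finite_star_verts)
  then show ?thesis by (simp add: M_def)
qed

lemma lt_some: "M Vs Es (2*m+2) < M Vt Et (2*m+2)"
proof -
  have L: "1 \<le> 2*m+2" by simp
  have "card (CS (2*m+2)) = card (F ` CS (2*m+2))" using F_inj[OF L] by (simp add: card_image)
  also have "\<dots> < card (CT (2*m+2))"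
  proof (rule psubset_card_mono)
    show "finite (CT (2*m+2))" by (intro finite_cw finite_star_verts)
    show "F ` CS (2*m+2) \<subset> CT (2*m+2)"
      using F_mem[OF _ L] Wst_mem Wst_notin by blast
  qed
  finally show ?thesis by (simp add: M_def)
qed

lemma prec: "walk_prec Vs Es Vt Et"
  unfolding walk_prec_def using le_all lt_some by blast

end

theorem proposition2:
  fixes a :: "nat list" and n k :: nat
  assumes "length a = k" and "k \<ge> 3"
    and "sorted a" and "\<forall>x\<in>set a. 1 \<le> x"
    and "sum_list a = n"
    and "n > k"
  shows "walk_prec (star_verts a) (star_adj a)
           (star_verts (replicate k 1 @ [n - k])) (star_adj (replicate k 1 @ [n - k]))"
proof -
  interpret sw a k "n - k"
    using assms by unfold_locales auto
  show ?thesis using prec unfolding bt_def .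
qed

end
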